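(* For $0\le p\le1$, let $\mathcal{E}(p)$ be the qubit ensemble consisting of the states $|0\rangle,\ |1\rangle,\ (|0\rangle+|1\rangle)/\sqrt2,\ (|0\rangle-|1\rangle)/\sqrt2$ with probabilities $p/2,\ p/2,\ (1-p)/2,\ (1-p)/2$ respectively. Then $J(\mathcal{E}(p))=\frac34+\frac14|2p-1|$. In particular the BB84 ensemble $\mathcal{E}(1/2)$ has $J=3/4$.
   Context: Fidelity: $F(\rho,\sigma)=\big(\mathrm{tr}\sqrt{\rho^{1/2}\sigma\rho^{1/2}}\big)^2$. For an orthonormal basis $\{|j\rangle\}$ of $\mathbb{C}^2$ and state $\rho$, $\rho'=\sum_j\langle j|\rho|j\rangle|j\rangle\langle j|$. The ECCC of a finite ensemble is $J(\{q_i,\rho_i\})=\max_{\{|j\rangle\}}\sum_iq_iF(\rho_i,\rho_i')$, the maximum over all orthonormal bases of $\mathbb{C}^2$. Here $\{|0\rangle,|1\rangle\}$ is the computational basis. *)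

theory Defs
  imports "HOL-Analysis.Analysis"
begin

type_synonym qvec = "complex ^ 2"
type_synonym qmat = "complex ^ 2 ^ 2"

definition cinner :: "qvec \<Rightarrow> qvec \<Rightarrow> complex" where
  "cinner u v = (\<Sum>i\<in>UNIV. cnj (u $ i) * v $ i)"

definition adjointm :: "qmat \<Rightarrow> qmat" where
  "adjointm A = (\<chi> i j. cnj (A $ j $ i))"

definition psd :: "qmat \<Rightarrow> bool" where
  "psd A \<longleftrightarrow> adjointm A = A \<and> (\<forall>v. cinner v (A *v v) \<in> \<real> \<and> 0 \<le> Re (cinner v (A *v v)))"

definition msqrt :: "qmat \<Rightarrow> qmat" where
  "msqrt A = (THE B. psd B \<and> B ** B = A)"

definition mtrace :: "qmat \<Rightarrow> complex" where
  "mtrace A = (\<Sum>i\<in>UNIV. A $ i $ i)"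

definition fidelity :: "qmat \<Rightarrow> qmat \<Rightarrow> real" where
  "fidelity \<rho> \<sigma> = (Re (mtrace (msqrt (msqrt \<rho> ** \<sigma> ** msqrt \<rho>)))) ^ 2"

definition outer :: "qvec \<Rightarrow> qvec \<Rightarrow> qmat" where
  "outer u v = (\<chi> i j. u $ i * cnj (v $ j))"

definition orthonormal_basis2 :: "qvec \<Rightarrow> qvec \<Rightarrow> bool" where
  "orthonormal_basis2 u v \<longleftrightarrow> cinner u u = 1 \<and> cinner v v = 1 \<and> cinner u v = 0"

definition dephase :: "qvec \<Rightarrow> qvec \<Rightarrow> qmat \<Rightarrow> qmat" where
  "dephase u v \<rho> = (\<chi> i j. cinner u (\<rho> *v u) * outer u u $ i $ j + cinner v (\<rho> *v v) * outer v v $ i $ j)"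

text \<open>ECCC of a finite ensemble (list of probability/state pairs): maximum (supremum, which
  is attained) over orthonormal bases of C^2.\<close>
definition ECCC :: "(real \<times> qmat) list \<Rightarrow> real" where
  "ECCC E = Sup {(\<Sum>(q, \<rho>)\<leftarrow>E. q * fidelity \<rho> (dephase u v \<rho>)) | u v. orthonormal_basis2 u v}"

definition ket0 :: qvec where "ket0 = (\<chi> i. if i = 0 then 1 else 0)"
definition ket1 :: qvec where "ket1 = (\<chi> i. if i = 1 then 1 else 0)"
definition ketp :: qvec where "ketp = complex_of_real (1 / sqrt 2) *s (ket0 + ket1)"
definition ketm :: qvec where "ketm = complex_of_real (1 / sqrt 2) *s (ket0 - ket1)"

definition ensE :: "real \<Rightarrow> (real \<times> qmat) list" where
  "ensE p = [(p / 2, outer ket0 ket0), (p / 2, outer ket1 ket1),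
             ((1 - p) / 2, outer ketp ketp), ((1 - p) / 2, outer ketm ketm)]"

end

theory Submission
  imports Defs
begin


lemma two_ne_one[simp]: "(2::2) \<noteq> 1" "(1::2) \<noteq> 2" by auto
lemma zero2[simp]: "(0::2) = 2" by simp

lemma vec_eq2: "(x::'a^2) = y \<longleftrightarrow> x$1 = y$1 \<and> x$2 = y$2"
  by (auto simp: vec_eq_iff forall_2)
lemma mat_eq2: "(A::'a^2^2) = B \<longleftrightarrow> A$1$1 = B$1$1 \<and> A$1$2 = B$1$2 \<and> A$2$1 = B$2$1 \<and> A$2$2 = B$2$2"
  by (auto simp: vec_eq_iff forall_2)

lemma mmult2: "((A::complex^2^2) ** B)$i$j = A$i$1*B$1$j + A$i$2*B$2$j"
  by (simp add: matrix_matrix_mult_def sum_2)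
lemma mvmult2: "((A::complex^2^2) *v x)$i = A$i$1*x$1 + A$i$2*x$2"
  by (simp add: matrix_vector_mult_def sum_2)
lemma cinner2: "cinner u v = cnj (u$1) * v$1 + cnj (u$2) * v$2"
  by (simp add: cinner_def sum_2)
lemma mtrace2: "mtrace A = A$1$1 + A$2$2"
  by (simp add: mtrace_def sum_2)

definition vec2 :: "complex \<Rightarrow> complex \<Rightarrow> qvec" where "vec2 x y = (\<chi> i. if i = 1 then x else y)"
lemma vec2_comp[simp]: "vec2 x y $ 1 = x" "vec2 x y $ 2 = y" by (auto simp: vec2_def)

lemma ket_comp[simp]: "ket0 $ 1 = 0" "ket0 $ 2 = 1" "ket1 $ 1 = 1" "ket1 $ 2 = 0"
  "ketp $ 1 = 1 / sqrt 2" "ketp $ 2 = 1 / sqrt 2" "ketm $ 1 = - 1 / sqrt 2" "ketm $ 2 = 1 / sqrt 2"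
  by (auto simp: ket0_def ket1_def ketp_def ketm_def)



lemma psd_herm: assumes "psd B" shows "B$i$j = cnj (B$j$i)"
proof -
  have "adjointm B = B" using assms psd_def by auto
  hence "(adjointm B)$i$j = B$i$j" by simp
  thus ?thesis by (simp add: adjointm_def)
qed

lemma psd_quad: assumes "psd B" shows "cinner v (B *v v) \<in> \<real>" "0 \<le> Re (cinner v (B *v v))"
  using assms psd_def by auto

lemma real_of_selfcnj: assumes "z = cnj z" shows "z = complex_of_real (Re z)"
proof -
  have "Im z = Im (cnj z)" using assms by simp
  hence "Im z = 0" by simp
  thus ?thesis by (simp add: complex_eq_iff)
qed

lemma cnj_mult_self: "cnj z * z = (complex_of_real (cmod z))^2" "z * cnj z = (complex_of_real (cmod z))^2"
  using complex_norm_square[of z] by (simp_all add: mult.commute)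

lemma psd_parts:
  assumes "psd B"
  shows "B$1$1 = of_real (Re (B$1$1))" "B$2$2 = of_real (Re (B$2$2))" "B$2$1 = cnj (B$1$2)"
    "Re (B$1$1) \<ge> 0" "Re (B$2$2) \<ge> 0" "Re (B$1$1) * Re (B$2$2) \<ge> (cmod (B$1$2))^2"
proof -
  show h1: "B$1$1 = of_real (Re (B$1$1))" using psd_herm[OF assms, of 1 1] real_of_selfcnj by blast
  show h2: "B$2$2 = of_real (Re (B$2$2))" using psd_herm[OF assms, of 2 2] real_of_selfcnj by blast
  show h3: "B$2$1 = cnj (B$1$2)" using psd_herm[OF assms, of 2 1] by simp
  define a where "a = Re (B$1$1)"
  define d where "d = Re (B$2$2)"
  define b where "b = B$1$2"
  have B: "B$1$1 = of_real a" "B$2$2 = of_real d" "B$2$1 = cnj b" "B$1$2 = b"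
    using h1 h2 h3 a_def d_def b_def by auto
  have q1: "cinner (vec2 1 0) (B *v vec2 1 0) = of_real a"
    by (simp add: cinner2 mvmult2 B)
  show a0: "Re (B$1$1) \<ge> 0" using psd_quad(2)[OF assms, of "vec2 1 0"] q1 a_def by simp
  have q2: "cinner (vec2 0 1) (B *v vec2 0 1) = of_real d"
    by (simp add: cinner2 mvmult2 B)
  show d0: "Re (B$2$2) \<ge> 0" using psd_quad(2)[OF assms, of "vec2 0 1"] q2 d_def by simp
    show "Re (B$1$1) * Re (B$2$2) \<ge> (cmod (B$1$2))^2"
  proof (cases "a = 0")
    case False
    have "cinner (vec2 (-b) (of_real a)) (B *v vec2 (-b) (of_real a)) = of_real (a * (a*d - (cmod b)^2))"
      by (simp add: cinner2 mvmult2 B cnj_mult_self)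
    then have "a * (a*d - (cmod b)^2) \<ge> 0" using psd_quad(2)[OF assms, of "vec2 (-b) (of_real a)"] by simp
    moreover have "a > 0" using False a0 a_def by simp
    ultimately have "a*d - (cmod b)^2 \<ge> 0" by (simp add: zero_le_mult_iff)
    then show ?thesis using a_def d_def b_def by simp
  next
    case True
    have "cinner (vec2 (of_real d + 1) (- cnj b)) (B *v vec2 (of_real d + 1) (- cnj b)) = of_real (- (d+2) * (cmod b)^2)"
      apply (simp add: cinner2 mvmult2 B True cnj_mult_self) using cnj_mult_self(2)[of b] by algebra
    then have "- (d+2) * (cmod b)^2 \<ge> 0" using psd_quad(2)[OF assms, of "vec2 (of_real d + 1) (- cnj b)"] by simp
    moreover have "d \<ge> 0" using d0 d_def by simp
    moreover have "(d+2) * (cmod b)^2 \<ge> 0" using \<open>d \<ge> 0\<close> by simp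
    ultimately have "(d+2) * (cmod b)^2 = 0" by linarith
    hence "(cmod b)^2 \<le> 0" using \<open>d \<ge> 0\<close> by simp
    then show ?thesis using True a_def d_def b_def by simp
  qed
qed



lemma sqrt_core:
  fixes a d a' d' :: real and b b' :: complex
  assumes a0: "a \<ge> 0" and d0: "d \<ge> 0" and n0: "(cmod b)^2 \<le> a*d"
    and a0': "a' \<ge> 0" and d0': "d' \<ge> 0" and n0': "(cmod b')^2 \<le> a'*d'"
    and e1: "a^2 + (cmod b)^2 = a'^2 + (cmod b')^2"
    and e2: "d^2 + (cmod b)^2 = d'^2 + (cmod b')^2"
    and e3: "complex_of_real (a+d) * b = complex_of_real (a'+d') * b'"
  shows "a = a' \<and> d = d' \<and> b = b'"
proof -
  define n where "n = (cmod b)^2"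
  define n' where "n' = (cmod b')^2"
  have "cmod (complex_of_real (a+d) * b) = cmod (complex_of_real (a'+d') * b')" using e3 by simp
  hence "\<bar>a+d\<bar> * cmod b = \<bar>a'+d'\<bar> * cmod b'" by (simp only: norm_mult norm_of_real)
  hence "(a+d) * cmod b = (a'+d') * cmod b'" using a0 d0 a0' d0' by simp
  hence e3': "(a+d)^2 * n = (a'+d')^2 * n'" unfolding n_def n'_def by (metis power_mult_distrib)
  have det1: "(a*d - n)^2 = (a^2+n)*(d^2+n) - (a+d)^2*n" by (simp add: power2_eq_square algebra_simps)
  have det2: "(a'*d' - n')^2 = (a'^2+n')*(d'^2+n') - (a'+d')^2*n'" by (simp add: power2_eq_square algebra_simps)
  have "(a*d - n)^2 = (a'*d' - n')^2" using det1 det2 e1 e2 e3' n_def n'_def by simp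
  moreover have "a*d - n \<ge> 0" "a'*d' - n' \<ge> 0" using n0 n0' n_def n'_def by auto
  ultimately have dl: "a*d - n = a'*d' - n'" using power2_eq_iff_nonneg by blast
  have "(a+d)^2 = (a'+d')^2"
  proof -
    have "(a+d)^2 = (a^2+n) + (d^2+n) + 2*(a*d-n)" by (simp add: power2_eq_square algebra_simps)
    also have "\<dots> = (a'^2+n') + (d'^2+n') + 2*(a'*d'-n')" using e1 e2 dl n_def n'_def by simp
    also have "\<dots> = (a'+d')^2" by (simp add: power2_eq_square algebra_simps)
    finally show ?thesis .
  qed
  hence s: "a + d = a' + d'" using a0 d0 a0' d0' power2_eq_iff_nonneg by (metis add_nonneg_nonneg)
  show ?thesis
  proof (cases "a + d = 0")
    case True
    hence "a = 0" "d = 0" "a' = 0" "d' = 0" using a0 d0 a0' d0' s by auto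
    hence "cmod b = 0" "cmod b' = 0" using n0 n0' by auto
    thus ?thesis using \<open>a = 0\<close> \<open>d = 0\<close> \<open>a' = 0\<close> \<open>d' = 0\<close> by simp
  next
    case False
    hence bb: "b = b'" using e3 s by (metis mult_cancel_left of_real_eq_0_iff)
    hence "a^2 = a'^2" "d^2 = d'^2" using e1 e2 by auto
    hence "a = a'" "d = d'" using a0 d0 a0' d0' power2_eq_iff_nonneg by blast+
    thus ?thesis using bb by simp
  qed
qed

lemma sq_comps:
  assumes "psd B"
  shows "(B**B)$1$1 = complex_of_real ((Re (B$1$1))^2 + (cmod (B$1$2))^2)"
    "(B**B)$2$2 = complex_of_real ((Re (B$2$2))^2 + (cmod (B$1$2))^2)"
    "(B**B)$1$2 = complex_of_real (Re (B$1$1) + Re (B$2$2)) * B$1$2"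
proof -
  note p = psd_parts[OF assms]
  obtain a d b where B: "B$1$1 = of_real a" "B$2$2 = of_real d" "B$2$1 = cnj b" "B$1$2 = b"
    using p(1-3) by metis
  show "(B**B)$1$1 = complex_of_real ((Re (B$1$1))^2 + (cmod (B$1$2))^2)"
    by (simp add: mmult2 B cnj_mult_self power2_eq_square)
  show "(B**B)$2$2 = complex_of_real ((Re (B$2$2))^2 + (cmod (B$1$2))^2)"
    by (simp add: mmult2 B cnj_mult_self power2_eq_square)
  show "(B**B)$1$2 = complex_of_real (Re (B$1$1) + Re (B$2$2)) * B$1$2"
    by (simp add: mmult2 B algebra_simps)
qed

lemma psd_sqrt_unique:
  assumes B: "psd B" and C: "psd C" and e: "B ** B = C ** C"
  shows "B = C"
proof -
  note pB = psd_parts[OF B] and pC = psd_parts[OF C]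
  have e1: "(Re (B$1$1))^2 + (cmod (B$1$2))^2 = (Re (C$1$1))^2 + (cmod (C$1$2))^2"
    using sq_comps(1)[OF B] sq_comps(1)[OF C] e by (metis of_real_eq_iff)
  have e2: "(Re (B$2$2))^2 + (cmod (B$1$2))^2 = (Re (C$2$2))^2 + (cmod (C$1$2))^2"
    using sq_comps(2)[OF B] sq_comps(2)[OF C] e by (metis of_real_eq_iff)
  have e3: "complex_of_real (Re (B$1$1) + Re (B$2$2)) * B$1$2 = complex_of_real (Re (C$1$1) + Re (C$2$2)) * C$1$2"
    using sq_comps(3)[OF B] sq_comps(3)[OF C] e by metis
  have r: "Re (B$1$1) = Re (C$1$1) \<and> Re (B$2$2) = Re (C$2$2) \<and> B$1$2 = C$1$2"
    by (rule sqrt_core[OF pB(4) pB(5) pB(6) pC(4) pC(5) pC(6) e1 e2 e3])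
  show ?thesis unfolding mat_eq2
    using r pB(1-3) pC(1-3) by metis
qed



lemma msqrt_eq: assumes "psd B" "B ** B = M" shows "msqrt M = B"
  unfolding msqrt_def
  using assms psd_sqrt_unique by (intro the_equality) auto

lemma scaleR_cplx: "(s::real) *\<^sub>R (z::complex) = complex_of_real s * z"
  by (simp add: scaleR_conv_of_real)

lemma scaleR_comp2: "((s::real) *\<^sub>R (A::qmat))$i$j = complex_of_real s * A$i$j"
  by (simp add: scaleR_conv_of_real[symmetric])

lemma psd_outer: assumes "t \<ge> 0" shows "psd (t *\<^sub>R outer \<psi> \<psi>)"
proof -
  have adj: "adjointm (t *\<^sub>R outer \<psi> \<psi>) = t *\<^sub>R outer \<psi> \<psi>"
    by (simp add: mat_eq2 adjointm_def scaleR_comp2 scaleR_cplx outer_def mult.commute)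
  have q: "cinner v ((t *\<^sub>R outer \<psi> \<psi>) *v v) = of_real t * (cnj (cinner \<psi> v) * cinner \<psi> v)" for v
    by (simp add: cinner2 mvmult2 scaleR_comp2 scaleR_cplx outer_def algebra_simps)
  have q2: "cinner v ((t *\<^sub>R outer \<psi> \<psi>) *v v) = of_real (t * (cmod (cinner \<psi> v))^2)" for v
    unfolding q cnj_mult_self by simp
  show ?thesis unfolding psd_def using adj q2 assms by simp
qed

lemma outer_sq: assumes "cinner \<psi> \<psi> = 1" shows "outer \<psi> \<psi> ** outer \<psi> \<psi> = outer \<psi> \<psi>"
proof -
  have e: "cnj (\<psi>$1) * \<psi>$1 + cnj (\<psi>$2) * \<psi>$2 = 1" using assms by (simp add: cinner2)
  have "\<And>i j. (outer \<psi> \<psi> ** outer \<psi> \<psi>)$i$j = \<psi>$i * cnj (\<psi>$j) * (cnj (\<psi>$1) * \<psi>$1 + cnj (\<psi>$2) * \<psi>$2)"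
    by (simp add: mmult2 outer_def algebra_simps)
  thus ?thesis unfolding e by (simp add: mat_eq2 outer_def)
qed

lemma sandwich: assumes "cinner \<psi> (\<sigma> *v \<psi>) = complex_of_real r"
  shows "outer \<psi> \<psi> ** \<sigma> ** outer \<psi> \<psi> = r *\<^sub>R outer \<psi> \<psi>"
proof -
  have "\<And>i j. (outer \<psi> \<psi> ** \<sigma> ** outer \<psi> \<psi>)$i$j = \<psi>$i * cnj (\<psi>$j) * cinner \<psi> (\<sigma> *v \<psi>)"
    by (simp add: mmult2 mvmult2 cinner2 outer_def algebra_simps)
  thus ?thesis unfolding assms by (simp add: mat_eq2 outer_def scaleR_comp2 scaleR_cplx mult.commute)
qed

lemma scaleR_mm: "((s::real) *\<^sub>R (A::qmat)) ** ((t::real) *\<^sub>R (B::qmat)) = (s*t) *\<^sub>R (A ** B)"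
  unfolding mat_eq2 by (simp add: mmult2 scaleR_cplx algebra_simps)

lemma fidelity_pure:
  assumes u: "cinner \<psi> \<psi> = 1" and c: "cinner \<psi> (\<sigma> *v \<psi>) = complex_of_real r" and r: "r \<ge> 0"
  shows "fidelity (outer \<psi> \<psi>) \<sigma> = r"
proof -
  have P: "msqrt (outer \<psi> \<psi>) = outer \<psi> \<psi>"
    using msqrt_eq[OF psd_outer[of 1 \<psi>]] outer_sq[OF u] by simp
  have S: "msqrt (r *\<^sub>R outer \<psi> \<psi>) = sqrt r *\<^sub>R outer \<psi> \<psi>"
    by (rule msqrt_eq[OF psd_outer]) (use r in \<open>simp_all add: scaleR_mm outer_sq[OF u]\<close>)
  have T: "mtrace (sqrt r *\<^sub>R outer \<psi> \<psi>) = complex_of_real (sqrt r)"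
  proof -
    have "mtrace (sqrt r *\<^sub>R outer \<psi> \<psi>) = complex_of_real (sqrt r) * cinner \<psi> \<psi>"
      by (simp add: mtrace2 cinner2 scaleR_comp2 scaleR_cplx outer_def algebra_simps)
    thus ?thesis using u by simp
  qed
  show ?thesis unfolding fidelity_def P sandwich[OF c] S T using r by simp
qed



lemma cinner_swap: "cinner v u = cnj (cinner u v)"
  by (simp add: cinner2 mult.commute)

lemma quad_outer: "cinner w (outer u u *v w) = cnj (cinner u w) * cinner u w"
  by (simp add: cinner2 mvmult2 outer_def algebra_simps)

lemma quad_outer': "cinner w (outer u u *v w) = complex_of_real ((cmod (cinner w u))^2)"
proof -
  have "cinner w (outer u u *v w) = complex_of_real (cmod (cinner u w))^2"
    unfolding quad_outer cnj_mult_self ..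
  moreover have "cmod (cinner u w) = cmod (cinner w u)" by (simp add: cinner_swap[of u w])
  ultimately show ?thesis by simp
qed

lemma deph_lin: "cinner w (dephase u v \<rho> *v w) = cinner u (\<rho> *v u) * cinner w (outer u u *v w) + cinner v (\<rho> *v v) * cinner w (outer v v *v w)"
  by (simp add: dephase_def cinner2 mvmult2 algebra_simps)

lemma deph_val: "cinner \<psi> (dephase u v (outer \<psi> \<psi>) *v \<psi>) = complex_of_real ((cmod (cinner u \<psi>))^4 + (cmod (cinner v \<psi>))^4)"
proof -
  have a: "cmod (cinner \<psi> u) = cmod (cinner u \<psi>)" "cmod (cinner \<psi> v) = cmod (cinner v \<psi>)"
    by (simp_all add: cinner_swap[of \<psi>])
  show ?thesis unfolding deph_lin quad_outer' a
    by (simp add: power2_eq_square power4_eq_xxxx)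
qed

lemma fid_deph: assumes "cinner \<psi> \<psi> = 1"
  shows "fidelity (outer \<psi> \<psi>) (dephase u v (outer \<psi> \<psi>)) = (cmod (cinner u \<psi>))^4 + (cmod (cinner v \<psi>))^4"
  by (rule fidelity_pure[OF assms deph_val]) simp



lemma orth_sum:
  assumes "orthonormal_basis2 u v"
  shows "(cmod (u$1))^2 + (cmod (v$1))^2 = 1"
proof -
  have uu: "(cmod (u$1))^2 + (cmod (u$2))^2 = 1"
  proof -
    have "cinner u u = complex_of_real ((cmod (u$1))^2 + (cmod (u$2))^2)"
      by (simp add: cinner2 cnj_mult_self)
    thus ?thesis using assms unfolding orthonormal_basis2_def by (metis of_real_1 of_real_eq_iff)
  qed
  have vv: "(cmod (v$1))^2 + (cmod (v$2))^2 = 1"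
  proof -
    have "cinner v v = complex_of_real ((cmod (v$1))^2 + (cmod (v$2))^2)"
      by (simp add: cinner2 cnj_mult_self)
    thus ?thesis using assms unfolding orthonormal_basis2_def by (metis of_real_1 of_real_eq_iff)
  qed
  have "cnj (u$1) * v$1 = - (cnj (u$2) * v$2)"
    using assms unfolding orthonormal_basis2_def cinner2 by (simp add: add_eq_0_iff)
  hence "cmod (cnj (u$1) * v$1) = cmod (cnj (u$2) * v$2)" by (metis norm_minus_cancel)
  hence "cmod (u$1) * cmod (v$1) = cmod (u$2) * cmod (v$2)" by (simp add: norm_mult)
  hence "(cmod (u$1))^2 * (cmod (v$1))^2 = (cmod (u$2))^2 * (cmod (v$2))^2"
    by (metis power_mult_distrib)
  hence "(cmod (u$1))^2 * (cmod (v$1))^2 = (1 - (cmod (u$1))^2) * (1 - (cmod (v$1))^2)"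
    using uu vv by (metis add_diff_cancel_left')
  thus ?thesis by (simp add: algebra_simps)
qed

definition hk :: real where "hk = 1 / sqrt 2"
lemma hk2: "hk * hk = 1/2" unfolding hk_def by (simp add: field_simps)

definition had :: "qvec \<Rightarrow> qvec" where
  "had u = vec2 (of_real hk * (u$1 + u$2)) (of_real hk * (u$1 - u$2))"

lemma cinner_had: "cinner (had u) (had w) = cinner u w"
proof -
  have k: "complex_of_real hk * complex_of_real hk = 1/2" by (metis hk2 of_real_mult of_real_divide of_real_1 of_real_numeral)
  have "cinner (had u) (had w) = (complex_of_real hk * complex_of_real hk) * (2 * cinner u w)"
    by (simp add: had_def cinner2 algebra_simps)
  thus ?thesis unfolding k by simp
qed

lemma orth_had: "orthonormal_basis2 u v \<Longrightarrow> orthonormal_basis2 (had u) (had v)"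
  unfolding orthonormal_basis2_def cinner_had by simp



lemma unit_sum: assumes "cinner u u = 1" shows "(cmod (u$1))^2 + (cmod (u$2))^2 = 1"
proof -
  have "cinner u u = complex_of_real ((cmod (u$1))^2 + (cmod (u$2))^2)"
    by (simp add: cinner2 cnj_mult_self)
  thus ?thesis using assms by (metis of_real_1 of_real_eq_iff)
qed

lemma hk_pos: "hk > 0" unfolding hk_def by simp

lemma real_constraint:
  fixes a b c d :: real
  assumes "a^2 + b^2 + c^2 + d^2 = 1"
  shows "(a^2 + b^2 - 1/2)^2 + (((a+c)^2 + (b+d)^2)/2 - 1/2)^2 \<le> 1/4"
proof -
  define s where "s = a^2 + b^2"
  define t where "t = c^2 + d^2"
  have st: "s + t = 1" using assms s_def t_def by simp
  have "(a^2 + b^2 - (s+t)/2)^2 + (((a+c)^2 + (b+d)^2)/2 - (s+t)/2)^2 = (s+t)^2/4 - (a*d-b*c)^2"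
    unfolding s_def t_def by (simp add: power2_eq_square field_simps)
  hence "(a^2 + b^2 - 1/2)^2 + (((a+c)^2 + (b+d)^2)/2 - 1/2)^2 = 1/4 - (a*d-b*c)^2"
    using st by simp
  thus ?thesis by simp
qed

lemma constraint:
  assumes "cinner u u = 1"
  shows "((cmod (u$1))^2 - 1/2)^2 + ((cmod ((had u)$1))^2 - 1/2)^2 \<le> 1/4"
proof -
  have h: "(cmod ((had u)$1))^2 = ((Re (u$1) + Re (u$2))^2 + (Im (u$1) + Im (u$2))^2) / 2"
  proof -
    have "(cmod ((had u)$1))^2 = (hk * cmod (u$1 + u$2))^2" using hk_pos by (simp add: had_def norm_mult)
    also have "\<dots> = (hk*hk) * (cmod (u$1 + u$2))^2" by (simp add: power2_eq_square)
    also have "\<dots> = ((Re (u$1) + Re (u$2))^2 + (Im (u$1) + Im (u$2))^2) / 2"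
      unfolding hk2 cmod_power2 by simp
    finally show ?thesis .
  qed
  have "(Re (u$1))^2 + (Im (u$1))^2 + (Re (u$2))^2 + (Im (u$2))^2 = 1"
    using unit_sum[OF assms] unfolding cmod_power2 by simp
  from real_constraint[OF this]
  have "((cmod (u$1))^2 - 1/2)^2 + (((Re (u$1) + Re (u$2))^2 + (Im (u$1) + Im (u$2))^2) / 2 - 1/2)^2 \<le> 1/4"
    by (simp only: cmod_power2)
  then show ?thesis by (simp only: h)
qed



lemma ketc: "ketp $ 1 = of_real hk" "ketp $ 2 = of_real hk" "ketm $ 1 = - of_real hk" "ketm $ 2 = of_real hk"
  by (simp_all add: hk_def)

lemma hk2c: "complex_of_real hk * complex_of_real hk = 1/2"
  by (metis hk2 of_real_mult of_real_divide of_real_1 of_real_numeral)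

lemma ket_units: "cinner ket0 ket0 = 1" "cinner ket1 ket1 = 1" "cinner ketp ketp = 1" "cinner ketm ketm = 1"
proof -
  show "cinner ket0 ket0 = 1" "cinner ket1 ket1 = 1" by (simp_all add: cinner2)
  have "cinner ketp ketp = 2 * (complex_of_real hk * complex_of_real hk)"
    unfolding cinner2 ketc by simp
  thus "cinner ketp ketp = 1" unfolding hk2c by simp
  have "cinner ketm ketm = 2 * (complex_of_real hk * complex_of_real hk)"
    unfolding cinner2 ketc by simp
  thus "cinner ketm ketm = 1" unfolding hk2c by simp
qed

lemma ket_inner: "cmod (cinner w ket0) = cmod (w$2)" "cmod (cinner w ket1) = cmod (w$1)"
  "cmod (cinner w ketp) = cmod (had w $ 1)" "cmod (cinner w ketm) = cmod (had w $ 2)"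
proof -
  show "cmod (cinner w ket0) = cmod (w$2)" "cmod (cinner w ket1) = cmod (w$1)" by (simp_all add: cinner2)
  have "cinner w ketp = cnj (had w $ 1)" unfolding cinner2 ketc had_def by (simp add: algebra_simps)
  thus "cmod (cinner w ketp) = cmod (had w $ 1)" by simp
  have "cinner w ketm = - cnj (had w $ 2)" unfolding cinner2 ketc had_def by (simp add: algebra_simps)
  thus "cmod (cinner w ketm) = cmod (had w $ 2)" by simp
qed

lemma pow4: "(x::real)^4 = (x^2)^2" by simp

lemma value_formula:
  assumes ON: "orthonormal_basis2 u v"
  shows "(\<Sum>(q, \<rho>)\<leftarrow>ensE p. q * fidelity \<rho> (dephase u v \<rho>))
     = p * (((cmod (u$1))^2)^2 + (1 - (cmod (u$1))^2)^2) + (1 - p) * (((cmod (had u $ 1))^2)^2 + (1 - (cmod (had u $ 1))^2)^2)"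
proof -
  have uu: "cinner u u = 1" and vv: "cinner v v = 1" using ON orthonormal_basis2_def by auto
  have ONh: "orthonormal_basis2 (had u) (had v)" by (rule orth_had[OF ON])
  have hu: "cinner (had u) (had u) = 1" and hv: "cinner (had v) (had v) = 1" using ONh orthonormal_basis2_def by auto
  note s1 = orth_sum[OF ON] unit_sum[OF uu] unit_sum[OF vv]
  note s2 = orth_sum[OF ONh] unit_sum[OF hu] unit_sum[OF hv]
  define A where "A = (cmod (u$1))^2"
  define Z where "Z = (cmod (had u $ 1))^2"
  have f0: "fidelity (outer ket0 ket0) (dephase u v (outer ket0 ket0)) = (1-A)^2 + A^2"
    unfolding fid_deph[OF ket_units(1)] ket_inner pow4 A_def using s1 by (smt (verit))
  have f1: "fidelity (outer ket1 ket1) (dephase u v (outer ket1 ket1)) = A^2 + (1-A)^2"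
    unfolding fid_deph[OF ket_units(2)] ket_inner pow4 A_def using s1 by (smt (verit))
  have fp: "fidelity (outer ketp ketp) (dephase u v (outer ketp ketp)) = Z^2 + (1-Z)^2"
    unfolding fid_deph[OF ket_units(3)] ket_inner pow4 Z_def using s2 by (smt (verit))
  have fm: "fidelity (outer ketm ketm) (dephase u v (outer ketm ketm)) = (1-Z)^2 + Z^2"
    unfolding fid_deph[OF ket_units(4)] ket_inner pow4 Z_def using s2 by (smt (verit))
  have "(\<Sum>(q, \<rho>)\<leftarrow>ensE p. q * fidelity \<rho> (dephase u v \<rho>)) = p * (A^2 + (1 - A)^2) + (1 - p) * (Z^2 + (1 - Z)^2)"
    by (simp add: ensE_def f0 f1 fp fm algebra_simps)
  then show ?thesis unfolding A_def Z_def .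
qed



lemma real_bound:
  fixes p A Z :: real
  assumes p0: "0 \<le> p" and p1: "p \<le> 1" and c: "(A - 1/2)^2 + (Z - 1/2)^2 \<le> 1/4"
  shows "p * (A^2 + (1 - A)^2) + (1 - p) * (Z^2 + (1 - Z)^2) \<le> 3/4 + \<bar>2*p - 1\<bar>/4"
proof -
  define x where "x = (A - 1/2)^2"
  define y where "y = (Z - 1/2)^2"
  have x0: "x \<ge> 0" and y0: "y \<ge> 0" using x_def y_def by auto
  have gA: "A^2 + (1 - A)^2 = 1/2 + 2*x" unfolding x_def by (simp add: power2_eq_square algebra_simps)
  have gZ: "Z^2 + (1 - Z)^2 = 1/2 + 2*y" unfolding y_def by (simp add: power2_eq_square algebra_simps)
  have xy: "x + y \<le> 1/4" using c x_def y_def by simp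
  have V: "p * (A^2 + (1 - A)^2) + (1 - p) * (Z^2 + (1 - Z)^2) = 1/2 + 2*(p*x + (1-p)*y)"
    unfolding gA gZ by (simp add: algebra_simps field_simps)
  show ?thesis
  proof (cases "p \<ge> 1/2")
    case True
    have "(1-p)*y \<le> p*y" using True y0 by (intro mult_right_mono) auto
    hence "p*x + (1-p)*y \<le> p*(x+y)" by (simp add: algebra_simps)
    also have "\<dots> \<le> p*(1/4)" using xy p0 by (intro mult_left_mono) auto
    finally have "p*x + (1-p)*y \<le> p/4" by simp
    moreover have "\<bar>2*p - 1\<bar> = 2*p - 1" using True by simp
    ultimately show ?thesis unfolding V by (simp add: field_simps)
  next
    case False
    have "p*x \<le> (1-p)*x" using False x0 by (intro mult_right_mono) auto
    hence "p*x + (1-p)*y \<le> (1-p)*(x+y)" by (simp add: algebra_simps)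
    also have "\<dots> \<le> (1-p)*(1/4)" using xy p1 by (intro mult_left_mono) auto
    finally have "p*x + (1-p)*y \<le> (1-p)/4" by simp
    moreover have "\<bar>2*p - 1\<bar> = 1 - 2*p" using False by simp
    ultimately show ?thesis unfolding V by (simp add: field_simps)
  qed
qed

lemma on01: "orthonormal_basis2 ket0 ket1"
  unfolding orthonormal_basis2_def using ket_units by (simp add: cinner2)

lemma onpm: "orthonormal_basis2 ketp ketm"
  unfolding orthonormal_basis2_def using ket_units by (simp add: cinner2 ketc)

lemma had0: "had ket0 $ 1 = of_real hk" by (simp add: had_def)
lemma hadp: "had ketp $ 1 = 1"
proof -
  have "had ketp $ 1 = 2 * (complex_of_real hk * complex_of_real hk)" unfolding had_def vec2_comp ketc by simp
  thus ?thesis unfolding hk2c by simp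
qed

lemma hk2sq: "hk^2 = 1/2" using hk2 by (simp add: power2_eq_square)

lemma hkc: "(cmod (complex_of_real hk))^2 = 1/2" using hk2sq by simp

theorem mainTheorem5:
  fixes p :: real
  assumes "0 \<le> p" and "p \<le> 1"
  shows "ECCC (ensE p) = 3 / 4 + \<bar>2 * p - 1\<bar> / 4 \<and> ECCC (ensE (1 / 2)) = 3 / 4"
proof -
  have main: "ECCC (ensE p) = 3 / 4 + \<bar>2 * p - 1\<bar> / 4" if p0: "0 \<le> p" and p1: "p \<le> 1" for p :: real
  proof -
    define S where "S = {(\<Sum>(q, \<rho>)\<leftarrow>ensE p. q * fidelity \<rho> (dephase u v \<rho>)) | u v. orthonormal_basis2 u v}"
    have ub: "x \<le> 3 / 4 + \<bar>2 * p - 1\<bar> / 4" if "x \<in> S" for x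
    proof -
      obtain u v where ON: "orthonormal_basis2 u v" and x: "x = (\<Sum>(q, \<rho>)\<leftarrow>ensE p. q * fidelity \<rho> (dephase u v \<rho>))"
        using \<open>x \<in> S\<close> S_def by auto
      have "cinner u u = 1" using ON orthonormal_basis2_def by auto
      from real_bound[OF p0 p1 constraint[OF this]] show ?thesis
        unfolding x value_formula[OF ON] .
    qed
    have mem: "3 / 4 + \<bar>2 * p - 1\<bar> / 4 \<in> S"
    proof (cases "p \<ge> 1/2")
      case True
      have "(\<Sum>(q, \<rho>)\<leftarrow>ensE p. q * fidelity \<rho> (dephase ket0 ket1 \<rho>)) = 3 / 4 + \<bar>2 * p - 1\<bar> / 4"
        unfolding value_formula[OF on01] had0 hkc using True by (simp add: field_simps)
      note e = this
      show ?thesis unfolding S_def mem_Collect_eq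
        apply (rule exI[of _ ket0], rule exI[of _ ket1])
        using e on01 by simp
    next
      case False
      have "(\<Sum>(q, \<rho>)\<leftarrow>ensE p. q * fidelity \<rho> (dephase ketp ketm \<rho>)) = 3 / 4 + \<bar>2 * p - 1\<bar> / 4"
        unfolding value_formula[OF onpm] hadp ketc hkc using False by (simp add: field_simps)
      note e = this
      show ?thesis unfolding S_def mem_Collect_eq
        apply (rule exI[of _ ketp], rule exI[of _ ketm])
        using e onpm by simp
    qed
    have "Sup S = 3 / 4 + \<bar>2 * p - 1\<bar> / 4" by (rule cSup_eq_maximum[OF mem ub])
    thus ?thesis unfolding ECCC_def S_def .
  qed
  show ?thesis using main[OF assms] main[of "1/2"] by simp
qed

end
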